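(* Let $n\ge2$, $s\in\mathbb{R}$, $0\le b<\frac12$ and $0<\varepsilon\le1-2b$. For $(\xi',\xi_n,\tau)\in\mathbb{R}^{n-1}\times\mathbb{R}\times\mathbb{R}$ define $$Q_1(\xi',\xi_n,\tau)=\chi_{\{1<\xi_n^2\le\frac12|\tau+\xi'^2|\}}\frac{(1+\xi'^2+|\tau+\xi'^2|)^s(1+|\tau+\xi'^2|)^{1/2}\xi_n}{(1+|\tau+\xi'^2+\xi_n^2|)^{2-\varepsilon}}.$$ Then for all $(\xi',\xi_n,\tau)\in\mathbb{R}^{n+1}$, $$Q_1\lesssim\begin{cases}(1+\xi'^2+\xi_n^2)^s(1+|\tau+\xi'^2+\xi_n^2|)^{-2b},&-\frac12\le s\le\frac12,\\ \big[(1+\xi'^2+\xi_n^2)^s+(1+|\tau|)^s\big](1+|\tau+\xi'^2+\xi_n^2|)^{-2b},&s<-\frac12\text{ or }s>\frac12.\end{cases}$$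
   Context: $\xi'^2=|\xi'|^2$; $\chi_A$ is the characteristic function of the set $A$ (here the set of $(\xi',\xi_n,\tau)$ with $1<\xi_n^2\le\frac12|\tau+\xi'^2|$). *)

theory Defs
  imports "HOL-Analysis.Analysis"
begin

text \<open>The multiplier Q_1 at a point (xi', xi_n, tau); xi' in R^(n-1) is a vector of type real^'n,
  only its squared Euclidean norm enters.\<close>
definition Q1 :: "real \<Rightarrow> real \<Rightarrow> real ^ 'n \<Rightarrow> real \<Rightarrow> real \<Rightarrow> real" where
  "Q1 s \<epsilon> \<xi>' \<xi>n \<tau> =
     (if 1 < \<xi>n\<^sup>2 \<and> \<xi>n\<^sup>2 \<le> \<bar>\<tau> + (norm \<xi>')\<^sup>2\<bar> / 2
      then (1 + (norm \<xi>')\<^sup>2 + \<bar>\<tau> + (norm \<xi>')\<^sup>2\<bar>) powr s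
           * (1 + \<bar>\<tau> + (norm \<xi>')\<^sup>2\<bar>) powr (1/2) * \<xi>n
           / (1 + \<bar>\<tau> + (norm \<xi>')\<^sup>2 + \<xi>n\<^sup>2\<bar>) powr (2 - \<epsilon>)
      else 0)"

definition Q1_bound :: "real \<Rightarrow> real \<Rightarrow> real ^ 'n \<Rightarrow> real \<Rightarrow> real \<Rightarrow> real" where
  "Q1_bound s b \<xi>' \<xi>n \<tau> =
     (if -1/2 \<le> s \<and> s \<le> 1/2
      then (1 + (norm \<xi>')\<^sup>2 + \<xi>n\<^sup>2) powr s
           * (1 + \<bar>\<tau> + (norm \<xi>')\<^sup>2 + \<xi>n\<^sup>2\<bar>) powr (-2 * b)
      else ((1 + (norm \<xi>')\<^sup>2 + \<xi>n\<^sup>2) powr s + (1 + \<bar>\<tau>\<bar>) powr s)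
           * (1 + \<bar>\<tau> + (norm \<xi>')\<^sup>2 + \<xi>n\<^sup>2\<bar>) powr (-2 * b))"

end

theory Submission
  imports Defs
begin

lemma keyE:
  fixes a t x tau s :: real
  assumes a: "a \<ge> 0" and tt: "t = tau + a" and x1: "1 < x\<^sup>2" and x2: "x\<^sup>2 \<le> \<bar>t\<bar>/2" and xp: "x > 0"
  shows "(1+a+\<bar>t\<bar>) powr s * (1+\<bar>t\<bar>) powr (1/2) * x / (1+\<bar>t\<bar>)
     \<le> (1 + 3 powr s) * (if -1/2 \<le> s \<and> s \<le> 1/2 then (1+a+x\<^sup>2) powr s
            else (1+a+x\<^sup>2) powr s + (1+\<bar>tau\<bar>) powr s)"
proof -
  define A where "A = 1+a+\<bar>t\<bar>"
  define B where "B = 1+a+x\<^sup>2"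
  define T where "T = 1+\<bar>t\<bar>"
  define P where "P = (1+\<bar>tau\<bar>) powr s"
  have Bp: "B > 0" "T > 0" "A > 0" using a unfolding A_def B_def T_def by (auto simp: add_nonneg_pos add_pos_nonneg)
  have P0: "P \<ge> 0" unfolding P_def by simp
  have xT: "x \<le> T powr (1/2)"
  proof -
    have "x = sqrt (x\<^sup>2)" using xp by simp
    also have "\<dots> \<le> sqrt T" unfolding T_def using x2 by (intro real_sqrt_le_mono) auto
    finally show ?thesis using Bp by (simp add: powr_half_sqrt)
  qed
  have f1: "T powr (1/2) * x / T \<le> 1"
  proof -
    have "T powr (1/2) * x \<le> T powr (1/2) * T powr (1/2)" using xT Bp by (intro mult_left_mono) auto
    also have "\<dots> = T" using Bp by (simp add: powr_add[symmetric])
    finally show ?thesis using Bp by simp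
  qed
  have AB: "A \<ge> B" unfolding A_def B_def using x2 by auto
  have main: "A powr s * T powr (1/2) * x / T \<le> (1 + 3 powr s) * B powr s"
    if "s \<le> 1/2"
  proof (cases "s \<le> 0")
    case True
    have "A powr s \<le> B powr s" using AB Bp True by (simp add: powr_mono2')
    hence "A powr s * (T powr (1/2) * x / T) \<le> B powr s * 1"
      using f1 Bp xp by (intro mult_mono) auto
    also have "\<dots> \<le> (1 + 3 powr s) * B powr s"
      using mult_right_mono[of 1 "1 + 3 powr s" "B powr s"] by simp
    finally show ?thesis by simp
  next
    case False
    have r1: "T / (1+x\<^sup>2) \<ge> 1" unfolding T_def using x2
      by (subst le_divide_eq_1_pos) (auto simp: add_pos_nonneg)
    have "A * (1+x\<^sup>2) \<le> B * T" unfolding A_def B_def T_def using a x2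
    proof -
      have "a * x\<^sup>2 \<le> a * \<bar>t\<bar>" using a x2 by (intro mult_left_mono) auto
      thus "(1 + a + \<bar>t\<bar>) * (1 + x\<^sup>2) \<le> (1 + a + x\<^sup>2) * (1 + \<bar>t\<bar>)" by (simp add: algebra_simps)
    qed
    hence "A \<le> B * (T / (1+x\<^sup>2))"
      by (subst times_divide_eq_right, subst le_divide_eq) (auto simp: add_pos_nonneg)
    hence "A powr s \<le> (B * (T / (1+x\<^sup>2))) powr s" using Bp False by (intro powr_mono2) auto
    also have "\<dots> = B powr s * (T / (1+x\<^sup>2)) powr s" using Bp
      by (simp only: powr_mult)
    also have "\<dots> \<le> B powr s * (T / (1+x\<^sup>2)) powr (1/2)"
      using r1 that by (intro mult_left_mono powr_mono) auto
    finally have Ale: "A powr s \<le> B powr s * (T / (1+x\<^sup>2)) powr (1/2)" .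
    have sq: "(T / (1+x\<^sup>2)) powr (1/2) * T powr (1/2) * x / T \<le> 1"
    proof -
      have e: "(T / (1+x\<^sup>2)) powr (1/2) * T powr (1/2) = T / sqrt (1+x\<^sup>2)"
        using Bp by (simp add: powr_half_sqrt real_sqrt_divide real_sqrt_mult[symmetric])
      have sp: "sqrt (1+x\<^sup>2) > 0" by (simp add: add_pos_nonneg)
      have "x \<le> sqrt (1+x\<^sup>2)" by (simp add: real_le_rsqrt)
      hence "x / sqrt (1+x\<^sup>2) \<le> 1" using sp by simp
      moreover have "(T / (1+x\<^sup>2)) powr (1/2) * T powr (1/2) * x / T = x / sqrt (1+x\<^sup>2)"
        unfolding e using Bp sp by (simp add: field_simps)
      ultimately show ?thesis by simp
    qed
    have "A powr s * T powr (1/2) * x / T \<le> B powr s * (T / (1+x\<^sup>2)) powr (1/2) * T powr (1/2) * x / T"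
      using Ale Bp xp by (simp add: divide_right_mono mult_right_mono)
    also have "\<dots> = B powr s * ((T / (1+x\<^sup>2)) powr (1/2) * T powr (1/2) * x / T)" by simp
    also have "\<dots> \<le> B powr s * 1" using sq by (intro mult_left_mono) auto
    also have "\<dots> \<le> (1 + 3 powr s) * B powr s"
      using mult_right_mono[of 1 "1 + 3 powr s" "B powr s"] by simp
    finally show ?thesis .
  qed
  have main2: "A powr s * T powr (1/2) * x / T \<le> (1 + 3 powr s) * (B powr s + P)"
    if "s > 1/2"
  proof -
    have "A \<le> 1 + 2*a + \<bar>tau\<bar>" unfolding A_def tt using a by simp
    also have "\<dots> \<le> 3 * max B (1+\<bar>tau\<bar>)" unfolding B_def max_def using a zero_le_power2[of x] by (auto; smt (verit) zero_le_power2)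
    finally have "A powr s \<le> (3 * max B (1+\<bar>tau\<bar>)) powr s" using Bp that by (intro powr_mono2) auto
    also have "\<dots> = 3 powr s * max B (1+\<bar>tau\<bar>) powr s" using Bp by (simp add: powr_mult)
    also have "\<dots> \<le> 3 powr s * (B powr s + P)" unfolding P_def using Bp
      by (intro mult_left_mono) (auto simp: max_def)
    finally have "A powr s \<le> 3 powr s * (B powr s + P)" .
    hence "A powr s * (T powr (1/2) * x / T) \<le> 3 powr s * (B powr s + P) * 1"
      using f1 Bp xp P0 by (intro mult_mono) auto
    also have "\<dots> \<le> (1 + 3 powr s) * (B powr s + P)"
      using P0 mult_right_mono[of "3 powr s" "1 + 3 powr s" "B powr s + P"] by simp
    finally show ?thesis by simp
  qed
  have "A powr s * T powr (1/2) * x / T \<le> (1 + 3 powr s) * (if -1/2 \<le> s \<and> s \<le> 1/2 then B powr s else B powr s + P)"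
  proof (cases "s > 1/2")
    case True thus ?thesis using main2 by auto
  next
    case False
    hence "A powr s * T powr (1/2) * x / T \<le> (1 + 3 powr s) * B powr s" using main by auto
    also have "\<dots> \<le> (1 + 3 powr s) * (if -1/2 \<le> s \<and> s \<le> 1/2 then B powr s else B powr s + P)"
      using P0 by (intro mult_left_mono) auto
    finally show ?thesis .
  qed
  thus ?thesis unfolding A_def B_def T_def P_def .
qed


lemma keyD:
  fixes t x b e :: real
  assumes x2: "x\<^sup>2 \<le> \<bar>t\<bar>/2" and "0 \<le> b" "0 < e" "e \<le> 1 - 2*b"
  shows "(1+\<bar>t\<bar>) / (1+\<bar>t + x\<^sup>2\<bar>) powr (2-e) \<le> 2 * (1+\<bar>t + x\<^sup>2\<bar>) powr (-2*b)"
proof -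
  define D where "D = 1+\<bar>t + x\<^sup>2\<bar>"
  define T where "T = 1+\<bar>t\<bar>"
  have D1: "D \<ge> 1" unfolding D_def by simp
  have TD: "T \<le> 2 * D" unfolding T_def D_def using x2 zero_le_power2[of x] abs_triangle_ineq4[of "t + x\<^sup>2" "x\<^sup>2"] by auto
  have "D powr (1 + 2*b) \<le> D powr (2-e)" using D1 assms by (intro powr_mono) auto
  moreover have "D powr (1 + 2*b) = D * D powr (2*b)" using D1 by (simp add: powr_add)
  ultimately have le: "D * D powr (2*b) \<le> D powr (2-e)" by simp
  have pos: "D powr (2*b) > 0" using D1 by simp
  have "T / D powr (2-e) \<le> T / (D * D powr (2*b))"
    using le D1 pos T_def by (intro divide_left_mono) auto
  also have "\<dots> \<le> 2 * D / (D * D powr (2*b))" using TD D1 pos by (intro divide_right_mono) auto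
  also have "\<dots> = 2 * D powr (-2*b)" using D1 pos by (simp add: powr_minus field_simps)
  finally show ?thesis unfolding D_def T_def .
qed

theorem lemma5p1:
  fixes s b \<epsilon> :: real
  assumes "0 \<le> b" and "b < 1/2" and "0 < \<epsilon>" and "\<epsilon> \<le> 1 - 2 * b"
  shows "\<exists>C>0. \<forall>(\<xi>' :: real ^ 'n) (\<xi>n :: real) (\<tau> :: real).
           Q1 s \<epsilon> \<xi>' \<xi>n \<tau> \<le> C * Q1_bound s b \<xi>' \<xi>n \<tau>"
proof (intro exI[of _ "2 * (1 + 3 powr s)"] conjI allI)
  show "0 < 2 * (1 + 3 powr s)" by (simp add: add_pos_nonneg)
  fix \<xi>' :: "real ^ 'n" and x \<tau> :: real
  define a where "a = (norm \<xi>')\<^sup>2"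
  define t where "t = \<tau> + a"
  define E where "E = (if -1/2 \<le> s \<and> s \<le> 1/2 then (1+a+x\<^sup>2) powr s
            else (1+a+x\<^sup>2) powr s + (1+\<bar>\<tau>\<bar>) powr s)"
  define D where "D = (1+\<bar>t + x\<^sup>2\<bar>) powr (-2*b)"
  have a0: "a \<ge> 0" unfolding a_def by simp
  have E0: "E \<ge> 0" unfolding E_def by simp
  have D0: "D \<ge> 0" unfolding D_def by simp
  have bnd: "Q1_bound s b \<xi>' x \<tau> = E * D"
    unfolding Q1_bound_def E_def D_def a_def t_def by (simp add: algebra_simps)
  have C0: "2 * (1 + 3 powr s) \<ge> 0" by (simp add: add_nonneg_nonneg)
  show "Q1 s \<epsilon> \<xi>' x \<tau> \<le> 2 * (1 + 3 powr s) * Q1_bound s b \<xi>' x \<tau>"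
  proof (cases "1 < x\<^sup>2 \<and> x\<^sup>2 \<le> \<bar>t\<bar> / 2 \<and> x > 0")
    case True
    hence x1: "1 < x\<^sup>2" and x2: "x\<^sup>2 \<le> \<bar>t\<bar> / 2" and xp: "x > 0" by auto
    have q: "Q1 s \<epsilon> \<xi>' x \<tau> = (1+a+\<bar>t\<bar>) powr s * (1+\<bar>t\<bar>) powr (1/2) * x / (1+\<bar>t\<bar>)
        * ((1+\<bar>t\<bar>) / (1+\<bar>t + x\<^sup>2\<bar>) powr (2-\<epsilon>))"
      using x1 x2 unfolding Q1_def a_def[symmetric] t_def[symmetric]
      by (simp add: add.assoc)
    have K: "(1+a+\<bar>t\<bar>) powr s * (1+\<bar>t\<bar>) powr (1/2) * x / (1+\<bar>t\<bar>) \<le> (1 + 3 powr s) * E"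
      unfolding E_def using keyE[OF a0 t_def x1 x2 xp] .
    have K0: "0 \<le> (1+a+\<bar>t\<bar>) powr s * (1+\<bar>t\<bar>) powr (1/2) * x / (1+\<bar>t\<bar>)" using xp by simp
    have L: "(1+\<bar>t\<bar>) / (1+\<bar>t + x\<^sup>2\<bar>) powr (2-\<epsilon>) \<le> 2 * D"
      unfolding D_def using keyD[OF x2 assms(1,3,4)] .
    have "Q1 s \<epsilon> \<xi>' x \<tau> \<le> ((1 + 3 powr s) * E) * (2 * D)"
      unfolding q using K L K0 E0 D0 by (intro mult_mono) auto
    thus ?thesis unfolding bnd by (simp add: algebra_simps)
  next
    case False
    have "Q1 s \<epsilon> \<xi>' x \<tau> \<le> 0"
    proof (cases "1 < x\<^sup>2 \<and> x\<^sup>2 \<le> \<bar>t\<bar> / 2")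
      case True
      with False have "x \<le> 0" by auto
      thus ?thesis using True unfolding Q1_def a_def[symmetric] t_def[symmetric]
        by (simp add: divide_nonpos_pos mult_nonneg_nonpos)
    next
      case False
      thus ?thesis unfolding Q1_def a_def[symmetric] t_def[symmetric] by auto
    qed
    also have "0 \<le> 2 * (1 + 3 powr s) * Q1_bound s b \<xi>' x \<tau>"
      unfolding bnd using C0 E0 D0 by simp
    finally show ?thesis .
  qed
qed

end
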